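(* Let $G$ be a simple, undirected, connected graph on $N\ge 2$ vertices with edge set $E$ and degrees $d_i$, and let $$\sigma^2=\frac{2}{N}\sum_{(i,j)\in E}\frac{1}{d_id_j}=\frac{\mathrm{tr}(P^2)}{N},\qquad \sigma\ge 0.$$ Then $$R^+(G)\ge N\left[\frac{1}{1+\frac{\sigma}{\sqrt{N-1}}}+\frac{(N-2)^2}{N-1-\frac{\sigma}{\sqrt{N-1}}}\right]+(N-1)^2.$$
   Context: $P=(p(v,w))$ is the $N\times N$ transition matrix of the simple random walk on $G$: $p(v,w)=1/d_v$ if $v,w$ are adjacent and $0$ otherwise. For vertices $i,j$, $R_{ij}$ denotes the effective resistance between $i$ and $j$ when every edge is a unit resistor. The additive degree-Kirchhoff index is $R^+(G)=\sum_{i<j}(d_i+d_j)R_{ij}$. *)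

theory Defs
  imports Complex_Main
begin

definition simple_graph :: "nat \<Rightarrow> (nat \<Rightarrow> nat \<Rightarrow> bool) \<Rightarrow> bool" where
  "simple_graph N E \<longleftrightarrow>
     (\<forall>i j. E i j \<longrightarrow> i < N \<and> j < N) \<and>
     (\<forall>i j. E i j \<longrightarrow> E j i) \<and>
     (\<forall>i. \<not> E i i)"

definition connected_graph :: "nat \<Rightarrow> (nat \<Rightarrow> nat \<Rightarrow> bool) \<Rightarrow> bool" where
  "connected_graph N E \<longleftrightarrow> (\<forall>i<N. \<forall>j<N. E\<^sup>*\<^sup>* i j)"

definition deg :: "nat \<Rightarrow> (nat \<Rightarrow> nat \<Rightarrow> bool) \<Rightarrow> nat \<Rightarrow> nat" where
  "deg N E i = card {j. j < N \<and> E i j}"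

definition laplacian_apply :: "nat \<Rightarrow> (nat \<Rightarrow> nat \<Rightarrow> bool) \<Rightarrow> (nat \<Rightarrow> real) \<Rightarrow> nat \<Rightarrow> real" where
  "laplacian_apply N E x v = (\<Sum>w\<in>{w. w < N \<and> E v w}. x v - x w)"

text \<open>Effective resistance (unit resistors): inject unit current at i, extract it at j;
the resulting potential difference x_i - x_j (Kirchhoff's laws: L x = e_i - e_j).\<close>
definition eff_resistance :: "nat \<Rightarrow> (nat \<Rightarrow> nat \<Rightarrow> bool) \<Rightarrow> nat \<Rightarrow> nat \<Rightarrow> real" where
  "eff_resistance N E i j =
     (THE r. \<exists>x. (\<forall>v<N. laplacian_apply N E x v =
                         (if v = i then 1 else 0) - (if v = j then 1 else 0))
               \<and> r = x i - x j)"

definition additive_degree_kirchhoff :: "nat \<Rightarrow> (nat \<Rightarrow> nat \<Rightarrow> bool) \<Rightarrow> real" where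
  "additive_degree_kirchhoff N E =
     (\<Sum>(i, j)\<in>{(i, j). i < j \<and> j < N}.
        (real (deg N E i) + real (deg N E j)) * eff_resistance N E i j)"

definition sigma_sq :: "nat \<Rightarrow> (nat \<Rightarrow> nat \<Rightarrow> bool) \<Rightarrow> real" where
  "sigma_sq N E =
     (2 / real N) * (\<Sum>(i, j)\<in>{(i, j). i < j \<and> j < N \<and> E i j}.
                        1 / (real (deg N E i) * real (deg N E j)))"

end

theory Submission imports Defs "Jordan_Normal_Form.Determinant" begin

definition Qf :: "nat \<Rightarrow> (nat \<Rightarrow> nat \<Rightarrow> bool) \<Rightarrow> (nat \<Rightarrow> real) \<Rightarrow> (nat \<Rightarrow> real) \<Rightarrow> real" where
  "Qf N E x y = (\<Sum>v<N. x v * laplacian_apply N E y v)"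

definition Ed :: "nat \<Rightarrow> (nat \<Rightarrow> nat \<Rightarrow> bool) \<Rightarrow> (nat \<times> nat) set" where
  "Ed N E = {(v, w). v < N \<and> w < N \<and> E v w}"

lemma finite_Ed: "finite (Ed N E)"
  by (rule finite_subset[of _ "{..<N} \<times> {..<N}"]) (auto simp: Ed_def)

lemma Ed_Sigma: "Ed N E = Sigma {..<N} (\<lambda>v. {w. w < N \<and> E v w})"
  by (auto simp: Ed_def)

lemma sum_Ed: "(\<Sum>v<N. \<Sum>w\<in>{w. w < N \<and> E v w}. f v w) = (\<Sum>(v,w)\<in>Ed N E. f v w)"
  unfolding Ed_Sigma by (rule sum.Sigma) auto

lemma sum_Ed_swap:
  assumes "simple_graph N E"
  shows "(\<Sum>(v,w)\<in>Ed N E. f v w) = (\<Sum>(v,w)\<in>Ed N E. f w v)"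
proof -
  have s: "\<And>v w. E v w \<Longrightarrow> E w v" using assms by (auto simp: simple_graph_def)
  have "prod.swap ` Ed N E = Ed N E" using s by (auto simp: Ed_def image_iff)
  moreover have "inj_on prod.swap (Ed N E)" by (rule inj_on_subset[OF _ subset_UNIV]) simp
  ultimately have "(\<Sum>p\<in>Ed N E. (\<lambda>(v,w). f v w) p) = (\<Sum>p\<in>Ed N E. (\<lambda>(v,w). f v w) (prod.swap p))"
    by (metis (no_types) sum.reindex_cong)
  thus ?thesis by (simp add: case_prod_beta)
qed

lemma Qf_pairs:
  assumes "simple_graph N E"
  shows "Qf N E x y = (1/2) * (\<Sum>(v,w)\<in>Ed N E. (x v - x w) * (y v - y w))"
proof -
  have "Qf N E x y = (\<Sum>(v,w)\<in>Ed N E. x v * (y v - y w))"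
    unfolding Qf_def laplacian_apply_def sum_distrib_left by (rule sum_Ed)
  moreover have "(\<Sum>(v,w)\<in>Ed N E. x v * (y v - y w)) = (\<Sum>(v,w)\<in>Ed N E. x w * (y w - y v))"
    by (rule sum_Ed_swap[OF assms])
  moreover have "(\<Sum>(v,w)\<in>Ed N E. (x v - x w) * (y v - y w)) =
      (\<Sum>(v,w)\<in>Ed N E. x v * (y v - y w)) + (\<Sum>(v,w)\<in>Ed N E. x w * (y w - y v))"
    by (simp add: sum.distrib[symmetric] case_prod_beta algebra_simps)
  ultimately show ?thesis by simp
qed

lemma Qf_sym: "simple_graph N E \<Longrightarrow> Qf N E x y = Qf N E y x"
  by (simp add: Qf_pairs mult.commute)

lemma Qf_nonneg: "simple_graph N E \<Longrightarrow> Qf N E x x \<ge> 0"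
  by (simp add: Qf_pairs case_prod_beta sum_nonneg)

lemma Qf_diff:
  assumes "simple_graph N E"
  shows "Qf N E (\<lambda>k. x k - y k) (\<lambda>k. x k - y k) = Qf N E x x - 2 * Qf N E x y + Qf N E y y"
proof -
  have "\<And>a b c d::real. ((a - b) - (c - d)) * ((a - b) - (c - d)) = (a-c)*(a-c) - 2*((a-c)*(b-d)) + (b-d)*(b-d)"
    by (simp add: algebra_simps)
  then show ?thesis unfolding Qf_pairs[OF assms]
    by (simp add: case_prod_beta sum.distrib sum_subtractf sum_distrib_left algebra_simps)
qed

lemma Qf_zero_const:
  assumes "simple_graph N E" "connected_graph N E" "Qf N E z z = 0" "a < N" "b < N"
  shows "z a = z b"
proof -
  have "(\<Sum>(v,w)\<in>Ed N E. (z v - z w) * (z v - z w)) = 0" using assms(3) Qf_pairs[OF assms(1)] by simp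
  hence e: "\<forall>p\<in>Ed N E. (\<lambda>(v,w). (z v - z w) * (z v - z w)) p = 0"
    by (subst sum_nonneg_eq_0_iff[OF finite_Ed, symmetric]) (auto simp: case_prod_beta)
  have "E\<^sup>*\<^sup>* a b" using assms(2,4,5) by (auto simp: connected_graph_def)
  thus ?thesis
  proof (induction rule: rtranclp_induct)
    case base then show ?case by simp
  next
    case (step u c)
    have "(u, c) \<in> Ed N E" using step(2) assms(1) by (auto simp: Ed_def simple_graph_def)
    then have "z u = z c" using e by auto
    with step show ?case by simp
  qed
qed

lemma lap_sum_zero: "simple_graph N E \<Longrightarrow> (\<Sum>v<N. laplacian_apply N E y v) = 0"
proof -
  assume a: "simple_graph N E"
  have "(\<Sum>v<N. laplacian_apply N E y v) = Qf N E (\<lambda>_. 1) y" by (simp add: Qf_def)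
  also have "\<dots> = 0" by (simp add: Qf_pairs[OF a])
  finally show ?thesis .
qed

lemma lap_diff: "laplacian_apply N E (\<lambda>k. x k - y k) v = laplacian_apply N E x v - laplacian_apply N E y v"
  by (simp add: laplacian_apply_def sum_subtractf[symmetric] algebra_simps)

lemma Qf_delta:
  assumes "i < N" "j < N"
    and y: "\<forall>v<N. laplacian_apply N E y v = (if v = i then 1 else 0) - (if v = j then 1 else 0)"
  shows "Qf N E x y = x i - x j"
proof -
  have "Qf N E x y = (\<Sum>v<N. (if v = i then x v else 0) - (if v = j then x v else 0))"
    unfolding Qf_def by (rule sum.cong) (auto simp: y)
  also have "\<dots> = x i - x j" using assms by (simp add: sum_subtractf)
  finally show ?thesis .
qed

lemma lap_test:
  fixes t :: real
  assumes "simple_graph N E" "i < N" "j < N" "i \<noteq> j"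
  defines "x \<equiv> \<lambda>k. t * ((if k = i then 1 else 0) - (if k = j then 1 else 0))"
  shows "laplacian_apply N E x i = t * real (deg N E i) + (if E i j then t else 0)"
    and "laplacian_apply N E x j = - t * real (deg N E j) - (if E j i then t else 0)"
proof -
  have irr: "\<And>u. \<not> E u u" using assms(1) by (auto simp: simple_graph_def)
  have fin: "\<And>u. finite {w. w < N \<and> E u w}" by auto
  have "laplacian_apply N E x i = (\<Sum>w\<in>{w. w < N \<and> E i w}. t + (if w = j then t else 0))"
    unfolding laplacian_apply_def x_def by (rule sum.cong) (use irr assms(4) in auto)
  also have "\<dots> = t * real (deg N E i) + (if E i j then t else 0)"
    using assms(3) by (simp add: sum.distrib deg_def fin sum.delta' mult.commute)
  finally show "laplacian_apply N E x i = t * real (deg N E i) + (if E i j then t else 0)" .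
  have "laplacian_apply N E x j = (\<Sum>w\<in>{w. w < N \<and> E j w}. - t - (if w = i then t else 0))"
    unfolding laplacian_apply_def x_def by (rule sum.cong) (use irr assms(4) in auto)
  also have "\<dots> = - t * real (deg N E j) - (if E j i then t else 0)"
    using assms(2) by (simp add: sum_subtractf deg_def fin sum.delta' mult.commute)
  finally show "laplacian_apply N E x j = - t * real (deg N E j) - (if E j i then t else 0)" .
qed

lemma R_lower:
  assumes g: "simple_graph N E" and ij: "i < N" "j < N" "i \<noteq> j"
    and y: "\<forall>v<N. laplacian_apply N E y v = (if v = i then 1 else 0) - (if v = j then 1 else 0)"
  shows "y i - y j \<ge> 4 / (real (deg N E i) + real (deg N E j) + (if E i j then 2 else 0))"
proof -
  have sym: "E j i = E i j" using g by (auto simp: simple_graph_def)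
  define c where "c = real (deg N E i) + real (deg N E j) + (if E i j then 2 else 0)"
  have main: "4 * t - t * t * c \<le> y i - y j" for t
  proof -
    define x where "x = (\<lambda>k. t * ((if k = i then 1 else 0) - (if k = j then 1 else (0::real))))"
    have xi: "x i = t" "x j = - t" using ij unfolding x_def by auto
    have Qxx: "Qf N E x x = t * t * c"
    proof -
      have "Qf N E x x = (\<Sum>v<N. (if v = i then t * laplacian_apply N E x v else 0)
                             - (if v = j then t * laplacian_apply N E x v else 0))"
        unfolding Qf_def by (rule sum.cong) (auto simp: x_def ij)
      also have "\<dots> = t * laplacian_apply N E x i - t * laplacian_apply N E x j"
        using ij by (simp add: sum_subtractf)
      also have "\<dots> = t * t * c"
        unfolding x_def lap_test[OF g ij] c_def sym by (simp add: algebra_simps)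
      finally show ?thesis .
    qed
    have Qxy: "Qf N E x y = 2 * t" using Qf_delta[OF ij(1,2) y] xi by simp
    have Qyy: "Qf N E y y = y i - y j" using Qf_delta[OF ij(1,2) y] .
    have "0 \<le> Qf N E (\<lambda>k. x k - y k) (\<lambda>k. x k - y k)" by (rule Qf_nonneg[OF g])
    also have "\<dots> = t * t * c - 4 * t + (y i - y j)" unfolding Qf_diff[OF g] Qxx Qxy Qyy by simp
    finally show ?thesis by simp
  qed
  have c0: "c \<ge> 0" unfolding c_def by simp
  show ?thesis
  proof (cases "c = 0")
    case True
    then show ?thesis using main[of 0] by (simp add: c_def)
  next
    case False
    hence "c > 0" using c0 by simp
    have "4 * (2/c) - (2/c) * (2/c) * c = 4 / c" using \<open>c > 0\<close> by (simp add: field_simps)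
    thus ?thesis using main[of "2/c"] unfolding c_def by simp
  qed
qed


lemma lap_expand:
  assumes g: "simple_graph N E"
  shows "laplacian_apply N E x v =
    (\<Sum>w<N. (if v = w then real (deg N E v) else if E v w then -1 else 0) * x w)" (is "_ = ?R")
proof -
  have irr: "\<And>u. \<not> E u u" using g by (auto simp: simple_graph_def)
  have fin: "finite {w. w < N \<and> E v w}" by auto
  have "?R = (\<Sum>w<N. (if v = w then real (deg N E v) * x w else 0) + (if E v w then - x w else 0))"
    by (rule sum.cong) (auto simp: irr)
  also have "\<dots> = (if v < N then real (deg N E v) * x v else 0) + (\<Sum>w<N. if E v w then - x w else 0)"
    by (simp add: sum.distrib)
  also have "(\<Sum>w<N. if E v w then - x w else 0) = (\<Sum>w\<in>{w. w < N \<and> E v w}. - x w)"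
    by (rule sum.mono_neutral_cong_right) auto
  finally have R: "?R = (if v < N then real (deg N E v) * x v else 0) - (\<Sum>w\<in>{w. w < N \<and> E v w}. x w)"
    by (simp add: sum_negf)
  have "laplacian_apply N E x v = real (deg N E v) * x v - (\<Sum>w\<in>{w. w < N \<and> E v w}. x w)"
    unfolding laplacian_apply_def by (simp add: sum_subtractf deg_def fin)
  moreover have "\<not> v < N \<Longrightarrow> deg N E v = 0"
    using g by (auto simp: deg_def simple_graph_def)
  ultimately show ?thesis using R by (cases "v < N") auto
qed

lemma potential_exists:
  assumes g: "simple_graph N E" and c: "connected_graph N E" and ij: "i < N" "j < N" "i \<noteq> j"
  shows "\<exists>y. \<forall>v<N. laplacian_apply N E y v = (if v = i then 1 else 0) - (if v = j then 1 else 0)"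
proof -
  define M :: "real mat" where "M = mat N N (\<lambda>(v,w). if v = j then (if w = j then 1 else 0)
      else (if v = w then real (deg N E v) else if E v w then -1 else 0))"
  have Mc: "M \<in> carrier_mat N N" unfolding M_def by simp
  have Mv: "(M *\<^sub>v z) $ v = (if v = j then z $ j else laplacian_apply N E (\<lambda>k. z $ k) v)"
    if "v < N" "z \<in> carrier_vec N" for v z
  proof -
    have "(M *\<^sub>v z) $ v = (\<Sum>w<N. M $$ (v, w) * z $ w)"
      using that Mc by (simp add: scalar_prod_def lessThan_atLeast0)
    also have "\<dots> = (if v = j then z $ j else laplacian_apply N E (\<lambda>k. z $ k) v)"
    proof (cases "v = j")
      case True
      then show ?thesis using that ij by (simp add: M_def if_distrib[of "\<lambda>a. a * _"] cong: if_cong)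
    next
      case False
      have "(\<Sum>w<N. M $$ (v, w) * z $ w) =
        (\<Sum>w<N. (if v = w then real (deg N E v) else if E v w then -1 else 0) * z $ w)"
        by (rule sum.cong) (use that False in \<open>auto simp: M_def\<close>)
      then show ?thesis using False unfolding lap_expand[OF g] by simp
    qed
    finally show ?thesis .
  qed
  have split: "(\<Sum>v<N. f v) = f j + (\<Sum>v\<in>{..<N} - {j}. f v)" for f :: "nat \<Rightarrow> real"
    using ij by (metis finite_lessThan lessThan_iff sum.remove)
  have inj: "z = 0\<^sub>v N" if z: "z \<in> carrier_vec N" "M *\<^sub>v z = 0\<^sub>v N" for z
  proof -
    define y where "y = (\<lambda>k. z $ k)"
    have yj: "y j = 0" using Mv[OF ij(2) z(1)] z ij by (simp add: y_def)
    have ly: "laplacian_apply N E y v = 0" if "v < N" "v \<noteq> j" for v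
      using Mv[OF that(1) z(1)] z that by (simp add: y_def)
    have "laplacian_apply N E y j = 0"
      using lap_sum_zero[OF g, of y] split[of "laplacian_apply N E y"] ly by simp
    hence ly': "\<forall>v<N. laplacian_apply N E y v = 0" using ly by metis
    have "Qf N E y y = 0" unfolding Qf_def using ly' by simp
    hence "y v = y j" if "v < N" for v using Qf_zero_const[OF g c _ that ij(2)] by simp
    thus ?thesis using yj z by (intro eq_vecI) (auto simp: y_def)
  qed
  define b :: "real vec" where "b = vec N (\<lambda>v. if v = j then 0 else if v = i then 1 else 0)"
  have bc: "b \<in> carrier_vec N" unfolding b_def by simp
  have "det M \<noteq> 0" using det_0_iff_vec_prod_zero[OF Mc] inj by blast
  from det_non_zero_imp_unit[OF Mc this, of N]
  obtain B where B: "B \<in> carrier_mat N N" "M * B = 1\<^sub>m N"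
    unfolding Units_def by (auto simp: ring_mat_def)
  define z where "z = B *\<^sub>v b"
  have zc: "z \<in> carrier_vec N" using B bc by (simp add: z_def)
  have Mz: "M *\<^sub>v z = b" unfolding z_def using B Mc bc by (metis assoc_mult_mat_vec one_mult_mat_vec)
  define y where "y = (\<lambda>k. z $ k)"
  have ly: "laplacian_apply N E y v = (if v = i then 1 else 0)" if "v < N" "v \<noteq> j" for v
    using Mv[OF that(1) zc] Mz that by (simp add: y_def b_def)
  have s1: "(\<Sum>v\<in>{..<N} - {j}. laplacian_apply N E y v) = (\<Sum>v\<in>{..<N} - {j}. if v = i then 1 else 0)"
    by (rule sum.cong) (auto simp: ly)
  have "(\<Sum>v\<in>{..<N} - {j}. (if v = i then 1 else 0 :: real)) = 1" using ij by simp
  hence "laplacian_apply N E y j = -1"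
    using lap_sum_zero[OF g, of y] split[of "laplacian_apply N E y"] s1 by simp
  hence "\<forall>v<N. laplacian_apply N E y v = (if v = i then 1 else 0) - (if v = j then 1 else 0)"
    using ly ij by auto
  thus ?thesis by blast
qed

lemma eff_res_eq:
  assumes g: "simple_graph N E" and c: "connected_graph N E" and ij: "i < N" "j < N" "i \<noteq> j"
  obtains y where "\<forall>v<N. laplacian_apply N E y v = (if v = i then 1 else 0) - (if v = j then 1 else 0)"
    and "eff_resistance N E i j = y i - y j"
proof -
  obtain y where y: "\<forall>v<N. laplacian_apply N E y v = (if v = i then 1 else 0) - (if v = j then 1 else 0)"
    using potential_exists[OF assms] by blast
  have uniq: "r = y i - y j" if h: "\<exists>x. (\<forall>v<N. laplacian_apply N E x v =
                         (if v = i then 1 else 0) - (if v = j then 1 else 0)) \<and> r = x i - x j" for r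
  proof -
    obtain x where x: "\<forall>v<N. laplacian_apply N E x v = (if v = i then 1 else 0) - (if v = j then 1 else 0)"
      and r: "r = x i - x j" using h by blast
    define z where "z = (\<lambda>k. x k - y k)"
    have "\<forall>v<N. laplacian_apply N E z v = 0" unfolding z_def lap_diff using x y by simp
    hence "Qf N E z z = 0" unfolding Qf_def by simp
    hence "z i = z j" using Qf_zero_const[OF g c _ ij(1,2)] by simp
    thus ?thesis unfolding r z_def by simp
  qed
  have "eff_resistance N E i j = y i - y j"
    unfolding eff_resistance_def by (rule the_equality) (use y uniq in blast)+
  with y that show ?thesis by blast
qed



lemma deg_le: assumes g: "simple_graph N E" "i < N" shows "real (deg N E i) \<le> real N - 1"
proof -
  have "{j. j < N \<and> E i j} \<subseteq> {..<N} - {i}" using g by (auto simp: simple_graph_def)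
  hence "card {j. j < N \<and> E i j} \<le> card ({..<N} - {i})" by (intro card_mono) auto
  also have "\<dots> = N - 1" using g by simp
  finally show ?thesis using g unfolding deg_def by linarith
qed

lemma deg_pos: assumes g: "simple_graph N E" and c: "connected_graph N E" and N: "N \<ge> 2" and i: "i < N"
  shows "real (deg N E i) \<ge> 1"
proof -
  define j where "j = (if i = 0 then 1 else 0::nat)"
  have j: "j < N" "j \<noteq> i" using N i by (auto simp: j_def)
  have "E\<^sup>*\<^sup>* i j" using c i j by (auto simp: connected_graph_def)
  hence "\<exists>k. E i k" using j(2) by (induction rule: converse_rtranclp_induct) auto
  then obtain k where "E i k" by blast
  hence "k \<in> {j. j < N \<and> E i j}" using g by (auto simp: simple_graph_def)
  hence "{j. j < N \<and> E i j} \<noteq> {}" by blast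
  hence "card {j. j < N \<and> E i j} \<noteq> 0" by simp
  hence "card {j. j < N \<and> E i j} \<ge> 1" by linarith
  thus ?thesis unfolding deg_def by (metis of_nat_1 of_nat_le_iff)
qed

definition Pe :: "nat \<Rightarrow> (nat \<Rightarrow> nat \<Rightarrow> bool) \<Rightarrow> (nat \<times> nat) set" where
  "Pe N E = {(i, j). i < j \<and> j < N \<and> E i j}"

lemma edge_sum:
  assumes g: "simple_graph N E"
  shows "(\<Sum>(i,j)\<in>Pe N E. f i + f j) = (\<Sum>i<N. real (deg N E i) * f i)"
proof -
  define Pe' where "Pe' = {(i, j). j < i \<and> i < N \<and> E i j}"
  have irr: "\<And>u. \<not> E u u" and sym: "\<And>u v. E u v \<Longrightarrow> E v u"
    using g by (auto simp: simple_graph_def)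
  have fPe: "finite (Pe N E)" by (rule finite_subset[OF _ finite_Ed[of N E]]) (auto simp: Pe_def Ed_def)
  have fPe': "finite Pe'" by (rule finite_subset[OF _ finite_Ed[of N E]]) (auto simp: Pe'_def Ed_def)
  have ne: "\<And>v w. E v w \<Longrightarrow> v < w \<or> w < v" using irr by (metis nat_neq_iff)
  have U: "Ed N E = Pe N E \<union> Pe'" unfolding Ed_def Pe_def Pe'_def
    by (auto dest: ne)
  have D: "Pe N E \<inter> Pe' = {}" by (auto simp: Pe_def Pe'_def)
  have sw: "Pe' = prod.swap ` Pe N E" unfolding Pe_def Pe'_def
    by (auto simp: image_iff dest: sym)
  have inj: "inj_on prod.swap (Pe N E)" by (rule inj_on_subset[OF _ subset_UNIV]) simp
  have "(\<Sum>(i,j)\<in>Pe'. f i) = (\<Sum>(i,j)\<in>Pe N E. f j)"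
    unfolding sw by (subst sum.reindex[OF inj]) (simp add: case_prod_beta)
  hence "(\<Sum>(i,j)\<in>Pe N E. f i + f j) = (\<Sum>(i,j)\<in>Ed N E. f i)"
    unfolding U by (simp add: sum.union_disjoint[OF fPe fPe' D] sum.distrib case_prod_beta)
  also have "\<dots> = (\<Sum>i<N. \<Sum>w\<in>{w. w < N \<and> E i w}. f i)" by (rule sum_Ed[symmetric])
  also have "\<dots> = (\<Sum>i<N. real (deg N E i) * f i)" by (simp add: deg_def)
  finally show ?thesis .
qed

lemma card_pairs: "card {(i, j). i < j \<and> j < (N::nat)} * 2 = N * (N - 1)"
proof (induction N)
  case 0 then show ?case by simp
next
  case (Suc N)
  have e: "{(i, j). i < j \<and> j < Suc N} = {(i, j). i < j \<and> j < N} \<union> (\<lambda>i. (i, N)) ` {..<N}"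
    by auto
  have f: "finite {(i, j). i < j \<and> j < (N::nat)}"
    by (rule finite_subset[of _ "{..<N} \<times> {..<N}"]) auto
  have "card {(i, j). i < j \<and> j < Suc N} = card {(i, j). i < j \<and> j < N} + N"
    unfolding e by (subst card_Un_disjoint) (auto simp: f card_image inj_on_def)
  then show ?case using Suc by (cases N) (auto simp: algebra_simps)
qed

lemma hm_am: fixes p q :: real assumes "p > 0" "q > 0" shows "4 / (p + q) \<le> 1/p + 1/q"
proof -
  have "1/p + 1/q - 4 / (p + q) = (p - q)\<^sup>2 / (p * q * (p + q))"
    using assms by (simp add: field_simps power2_eq_square)
  moreover have "(p - q)\<^sup>2 / (p * q * (p + q)) \<ge> 0" using assms by simp
  ultimately show ?thesis by linarith
qed
lemma pair_bound:
  fixes a b :: real assumes "a \<ge> 1" "b \<ge> 1"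
  shows "4 * (a + b) / (a + b + 2) \<ge> 4 - (2 / (a + 1) + 2 / (b + 1))"
proof -
  have p: "a + b + 2 > 0" using assms by auto
  have "4 * (a + b) / (a + b + 2) = 4 - 2 * (4 / ((a + 1) + (b + 1)))"
    using p by (simp add: field_simps)
  moreover have "4 / ((a + 1) + (b + 1)) \<le> 1/(a+1) + 1/(b+1)" using assms by (intro hm_am) auto
  ultimately show ?thesis by simp
qed
lemma h_ident:
  fixes n x :: real assumes "n \<ge> 3" "0 \<le> x" "x \<le> 1"
  shows "n * (1 / (1 + x) + (n - 2)\<^sup>2 / (n - 1 - x)) - (n - 1)\<^sup>2
         = ((n - 1) * x - 1)\<^sup>2 / ((n - 1 - x) * (1 + x))"
proof -
  define B where "B = n - 1 - x"
  define A where "A = 1 + x"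
  have B: "B \<noteq> 0" "A \<noteq> 0" using assms unfolding B_def A_def by auto
  have nB: "n = B + A" "x = A - 1" unfolding B_def A_def by simp_all
  have e: "A * B \<noteq> 0" "B * A \<noteq> 0" using B by auto
  show ?thesis unfolding nB using B e
    by (simp add: field_simps power2_eq_square)
qed

lemma real_main3:
  fixes n s :: real assumes n: "n \<ge> 3" and s1: "1 / (n - 1) \<le> s" and s2: "s \<le> 1"
  shows "n * (1 / (1 + sqrt s / sqrt (n - 1)) + (n - 2)\<^sup>2 / (n - 1 - sqrt s / sqrt (n - 1)))
          \<le> (n - 1)\<^sup>2 + (2/3) * (n * s - n / (n - 1))"
proof -
  define x where "x = sqrt s / sqrt (n - 1)"
  have s0: "s \<ge> 0" using order_trans[OF _ s1, of 0] n by simp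
  have x0: "x \<ge> 0" unfolding x_def using s0 n by simp
  have xsq: "x\<^sup>2 = s / (n - 1)" unfolding x_def using s0 n by (simp add: power_divide)
  have x1: "x \<le> 1"
  proof -
    have "x\<^sup>2 \<le> 1" using xsq s2 n by (simp add: divide_le_eq)
    thus ?thesis using x0 by (simp add: power_le_one_iff abs_le_iff)
  qed
  define w where "w = (n - 1) * x - 1"
  have sx: "s = (n - 1) * x\<^sup>2" using xsq n by simp
  have w0: "w \<ge> 0"
  proof -
    have ns: "(n-1)*s \<ge> 1" using s1 n by (simp add: divide_le_eq mult.commute)
    have "((n-1)*x)\<^sup>2 = (n-1)*s" unfolding sx by (simp add: power2_eq_square)
    hence "((n-1)*x)\<^sup>2 \<ge> 1" using ns by simp
    hence "(n-1)*x \<ge> 1" using x0 n power2_le_imp_le[of 1 "(n-1)*x"] by simp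
    thus ?thesis unfolding w_def by simp
  qed
  have rhs: "(2/3) * (n * s - n / (n - 1)) = (2 * n / (3 * (n - 1))) * (w * (w + 2))"
    unfolding w_def sx using n by (simp add: field_simps power2_eq_square)
  have D: "(n - 1 - x) * (1 + x) \<ge> n - 2"
  proof -
    have "(n - 1 - x) * (1 + x) - (n - 2) = 1 + (n - 2) * x - x * x" by (simp add: algebra_simps)
    moreover have "x * x \<le> 1" using x0 x1 by (simp add: mult_le_one)
    moreover have "(n - 2) * x \<ge> 0" using n x0 by simp
    ultimately show ?thesis by linarith
  qed
  have key: "w\<^sup>2 / ((n - 1 - x) * (1 + x)) \<le> (2 * n / (3 * (n - 1))) * (w * (w + 2))"
  proof -
    have p: "(n - 1 - x) * (1 + x) > 0" using D n by linarith
    have "w\<^sup>2 / ((n - 1 - x) * (1 + x)) \<le> w\<^sup>2 / (n - 2)"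
      using D n by (intro divide_left_mono) auto
    also have "\<dots> \<le> (2 * n / (3 * (n - 1))) * (w * (w + 2))"
    proof -
      have "3 * (n - 1) * w\<^sup>2 \<le> 2 * n * (n - 2) * (w * (w + 2))"
      proof -
        have "2 * n * (n - 2) - 3 * (n - 1) = (2*n - 1) * (n - 3)" by (simp add: algebra_simps)
        moreover have "(2*n - 1) * (n - 3) \<ge> 0" using n by simp
        ultimately have c: "3 * (n - 1) \<le> 2 * n * (n - 2)" by linarith
        have "3 * (n - 1) * w\<^sup>2 \<le> 2 * n * (n - 2) * w\<^sup>2" using c by (simp add: mult_right_mono)
        also have "\<dots> \<le> 2 * n * (n - 2) * (w * (w + 2))"
          using n w0 by (intro mult_left_mono) (auto simp: power2_eq_square intro: mult_left_mono)
        finally show ?thesis .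
      qed
      thus ?thesis using n by (simp add: field_simps)
    qed
    finally show ?thesis .
  qed
  show ?thesis
    using h_ident[OF n x0 x1] key rhs unfolding x_def w_def by linarith
qed

lemma Rplus_lower:
  assumes g: "simple_graph N E" and c: "connected_graph N E" and N: "N \<ge> 2"
  shows "additive_degree_kirchhoff N E \<ge>
     2 * real N * (real N - 1) - (\<Sum>i<N. real (deg N E i) * (2 / (real (deg N E i) + 1)))"
proof -
  define P where "P = {(i, j). i < j \<and> j < (N::nat)}"
  define d where "d = (\<lambda>i. real (deg N E i))"
  have fP: "finite P" unfolding P_def by (rule finite_subset[of _ "{..<N} \<times> {..<N}"]) auto
  have sym: "E j i = E i j" for i j using g by (auto simp: simple_graph_def)
  have each: "(d i + d j) * eff_resistance N E i j \<ge>
      4 - (if E i j then 2 / (d i + 1) + 2 / (d j + 1) else 0)" if "(i, j) \<in> P" for i j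
  proof -
    have ij: "i < N" "j < N" "i \<noteq> j" using that by (auto simp: P_def)
    obtain y where y: "\<forall>v<N. laplacian_apply N E y v = (if v = i then 1 else 0) - (if v = j then 1 else 0)"
      and R: "eff_resistance N E i j = y i - y j" using eff_res_eq[OF g c ij] by blast
    have Rl: "eff_resistance N E i j \<ge> 4 / (d i + d j + (if E i j then 2 else 0))"
      unfolding R d_def by (rule R_lower[OF g ij y])
    have di: "d i \<ge> 1" "d j \<ge> 1" unfolding d_def using deg_pos[OF g c N] ij by auto
    have "(d i + d j) * eff_resistance N E i j \<ge> (d i + d j) * (4 / (d i + d j + (if E i j then 2 else 0)))"
      using Rl di by (intro mult_left_mono) auto
    moreover have "(d i + d j) * (4 / (d i + d j + (if E i j then 2 else 0))) \<ge>
      4 - (if E i j then 2 / (d i + 1) + 2 / (d j + 1) else 0)"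
    proof (cases "E i j")
      case True
      then show ?thesis using pair_bound[OF di] by (simp add: mult.commute)
    next
      case False
      have "d i + d j \<noteq> 0" using di by linarith
      hence "(d i + d j) * (4 / (d i + d j)) = 4" by (simp add: field_simps)
      then show ?thesis using False by simp
    qed
    ultimately show ?thesis by linarith
  qed
  have "additive_degree_kirchhoff N E \<ge>
      (\<Sum>(i,j)\<in>P. 4 - (if E i j then 2 / (d i + 1) + 2 / (d j + 1) else 0))"
    unfolding additive_degree_kirchhoff_def P_def[symmetric]
    by (rule sum_mono) (use each in \<open>auto simp: d_def\<close>)
  also have "(\<Sum>(i,j)\<in>P. 4 - (if E i j then 2 / (d i + 1) + 2 / (d j + 1) else 0))
      = 4 * real (card P) - (\<Sum>(i,j)\<in>P. (if E i j then 2 / (d i + 1) + 2 / (d j + 1) else 0))"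
    by (simp add: sum_subtractf case_prod_beta)
  also have "(\<Sum>(i,j)\<in>P. (if E i j then 2 / (d i + 1) + 2 / (d j + 1) else 0))
      = (\<Sum>(i,j)\<in>Pe N E. 2 / (d i + 1) + 2 / (d j + 1))"
    by (rule sum.mono_neutral_cong_right) (use fP in \<open>auto simp: P_def Pe_def split: if_splits\<close>)
  also have "\<dots> = (\<Sum>i<N. real (deg N E i) * (2 / (real (deg N E i) + 1)))"
    unfolding d_def by (rule edge_sum[OF g])
  also have "real (card P) * 2 = real N * (real N - 1)"
  proof -
    have "real (card P * 2) = real (N * (N - 1))" unfolding P_def card_pairs ..
    thus ?thesis using N by (simp add: of_nat_diff)
  qed
  hence "4 * real (card P) = 2 * real N * (real N - 1)" by linarith
  finally show ?thesis by simp
qed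

lemma inv_prod_le: fixes a b :: real assumes "a > 0" "b > 0"
  shows "1 / (a * b) \<le> 1 / (2 * a\<^sup>2) + 1 / (2 * b\<^sup>2)"
proof -
  define p q where "p = 1/a" and "q = 1/b"
  have "1 / (a * b) = p * q" "1 / (2 * a\<^sup>2) = p\<^sup>2 / 2" "1 / (2 * b\<^sup>2) = q\<^sup>2 / 2"
    unfolding p_def q_def by (simp_all add: power2_eq_square)
  moreover have "p * q \<le> p\<^sup>2 / 2 + q\<^sup>2 / 2"
    using sum_squares_ge_zero[of "p - q" 0] by (simp add: power2_eq_square algebra_simps)
  ultimately show ?thesis by simp
qed

lemma inv_prod_ge: fixes a b m :: real assumes "a > 0" "b > 0" "a \<le> m" "b \<le> m"
  shows "1 / (2 * m * a) + 1 / (2 * m * b) \<le> 1 / (a * b)"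
proof -
  have "1 / (m * a) \<le> 1 / (b * a)" using assms by (intro divide_left_mono mult_right_mono) auto
  moreover have "1 / (m * b) \<le> 1 / (a * b)" using assms by (intro divide_left_mono mult_right_mono) auto
  ultimately show ?thesis by (simp add: mult.commute)
qed

lemma vertex_bound: fixes dn Nn :: nat assumes a: "1 \<le> dn" "dn \<le> Nn - 1" "Nn \<ge> 2"
  shows "1 / real dn - 1 / (real Nn - 1) \<le> 3 * (1 / (real dn + 1) - 1 / real Nn)"
proof (cases "dn = Nn - 1")
  case True then show ?thesis using a by (simp add: of_nat_diff)
next
  case False
  hence "Nn \<ge> 3" using a by linarith
  hence n3: "real Nn \<ge> 3" by simp
  define d n where "d = real dn" and "n = real Nn"
  have assms: "1 \<le> d" "d \<le> n - 1" "n \<ge> 2" using a unfolding d_def n_def by (auto simp: of_nat_diff)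
  note n3 = n3[folded n_def]
  have e1: "1 / d - 1 / (n - 1) = (n - 1 - d) * (1 / (d * (n - 1)))" using assms n3 by (simp add: field_simps)
  have e2: "3 * (1 / (d + 1) - 1 / n) = (n - 1 - d) * (3 / (n * (d + 1)))" using assms n3 by (simp add: field_simps)
  have k: "n * (d + 1) \<le> 3 * d * (n - 1)"
  proof -
    have "3 * d * (n - 1) - n * (d + 1) = (d - 1) * (2 * n - 3) + (n - 3)" by (simp add: algebra_simps)
    moreover have "(d - 1) * (2 * n - 3) \<ge> 0" using assms n3 by simp
    ultimately show ?thesis using n3 by linarith
  qed
  have "1 / (d * (n - 1)) \<le> 3 / (n * (d + 1))"
    using k assms n3 by (simp add: divide_simps)
  hence "1 / d - 1 / (n - 1) \<le> 3 * (1 / (d + 1) - 1 / n)"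
    unfolding e1 e2 using assms by (intro mult_left_mono) auto
  thus ?thesis unfolding d_def n_def .
qed


theorem theorem5:
  fixes N :: nat and E :: "nat \<Rightarrow> nat \<Rightarrow> bool"
  assumes "N \<ge> 2" and "simple_graph N E" and "connected_graph N E"
  defines "\<sigma> \<equiv> sqrt (sigma_sq N E)"
  shows "additive_degree_kirchhoff N E \<ge>
           real N * (1 / (1 + \<sigma> / sqrt (real N - 1))
                     + (real N - 2)\<^sup>2 / (real N - 1 - \<sigma> / sqrt (real N - 1)))
           + (real N - 1)\<^sup>2"
proof -
  note N = assms(1) and g = assms(2) and c = assms(3)
  define d where "d = (\<lambda>i. real (deg N E i))"
  define a where "a = (\<Sum>i<N. 1 / (d i + 1))"
  define u where "u = (\<Sum>i<N. 1 / d i)"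
  define s where "s = sigma_sq N E"
  define T where "T = (\<Sum>(i,j)\<in>Pe N E. 1 / (d i * d j))"
  have n1: "real N - 1 > 0" using N by simp
  have dpos: "d i \<ge> 1" if "i < N" for i using deg_pos[OF g c N that] by (simp add: d_def)
  have dle: "d i \<le> real N - 1" if "i < N" for i using deg_le[OF g that] by (simp add: d_def)
  have PeN: "i < N \<and> j < N" if "(i, j) \<in> Pe N E" for i j using that by (auto simp: Pe_def)
  have Rl: "additive_degree_kirchhoff N E \<ge> 2 * real N * (real N - 1) - 2 * real N + 2 * a"
  proof -
    have "(\<Sum>i<N. real (deg N E i) * (2 / (real (deg N E i) + 1))) = (\<Sum>i<N. 2 - 2 / (d i + 1))"
    proof (rule sum.cong)
      fix i assume "i \<in> {..<N}"
      hence "d i \<ge> 1" using dpos by simp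
      hence "d i + 1 \<noteq> 0" by linarith
      thus "real (deg N E i) * (2 / (real (deg N E i) + 1)) = 2 - 2 / (d i + 1)"
        unfolding d_def by (simp add: field_simps)
    qed simp
    also have "\<dots> = 2 * real N - 2 * a" unfolding a_def by (simp add: sum_subtractf sum_distrib_left)
    finally show ?thesis using Rplus_lower[OF g c N] by linarith
  qed
  have sT: "s = 2 / real N * T" unfolding s_def T_def sigma_sq_def Pe_def d_def ..
  have Tu: "T \<le> u / 2"
  proof -
    have "T \<le> (\<Sum>(i,j)\<in>Pe N E. 1 / (2 * (d i)\<^sup>2) + 1 / (2 * (d j)\<^sup>2))"
      unfolding T_def
    proof (rule sum_mono, clarify)
      fix i j assume "(i, j) \<in> Pe N E"
      hence "i < N" "j < N" using PeN by auto
      hence "d i \<ge> 1" "d j \<ge> 1" using dpos by auto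
      hence "d i > 0" "d j > 0" by linarith+
      thus "1 / (d i * d j) \<le> 1 / (2 * (d i)\<^sup>2) + 1 / (2 * (d j)\<^sup>2)" by (rule inv_prod_le)
    qed
    also have "\<dots> = (\<Sum>i<N. d i * (1 / (2 * (d i)\<^sup>2)))" unfolding d_def by (rule edge_sum[OF g])
    also have "\<dots> = (\<Sum>i<N. (1 / d i) / 2)"
    proof (rule sum.cong)
      fix i assume "i \<in> {..<N}"
      hence "d i \<ge> 1" using dpos by simp
      hence "d i \<noteq> 0" by linarith
      thus "d i * (1 / (2 * (d i)\<^sup>2)) = 1 / d i / 2" by (simp add: field_simps power2_eq_square)
    qed simp
    also have "\<dots> = u / 2" unfolding u_def by (simp add: sum_divide_distrib)
    finally show ?thesis .
  qed
  have Tl: "T \<ge> real N / (2 * (real N - 1))"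
  proof -
    have "T \<ge> (\<Sum>(i,j)\<in>Pe N E. 1 / (2 * (real N - 1) * d i) + 1 / (2 * (real N - 1) * d j))"
      unfolding T_def
    proof (rule sum_mono, clarify)
      fix i j assume "(i, j) \<in> Pe N E"
      hence ij: "i < N" "j < N" using PeN by auto
      hence "d i \<ge> 1" "d j \<ge> 1" using dpos by auto
      hence "d i > 0" "d j > 0" by linarith+
      moreover have "d i \<le> real N - 1" "d j \<le> real N - 1" using dle ij by auto
      ultimately have "d i > 0" "d j > 0" "d i \<le> real N - 1" "d j \<le> real N - 1" by auto
      thus "1 / (2 * (real N - 1) * d i) + 1 / (2 * (real N - 1) * d j) \<le> 1 / (d i * d j)"
        by (rule inv_prod_ge)
    qed
    also have "(\<Sum>(i,j)\<in>Pe N E. 1 / (2 * (real N - 1) * d i) + 1 / (2 * (real N - 1) * d j))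
        = (\<Sum>i<N. d i * (1 / (2 * (real N - 1) * d i)))" unfolding d_def by (rule edge_sum[OF g])
    also have "\<dots> = (\<Sum>i<N. 1 / (2 * (real N - 1)))"
    proof (rule sum.cong)
      fix i assume "i \<in> {..<N}"
      hence "d i \<ge> 1" using dpos by simp
      hence "d i \<noteq> 0" by linarith
      thus "d i * (1 / (2 * (real N - 1) * d i)) = 1 / (2 * (real N - 1))" using n1 by simp
    qed simp
    also have "\<dots> = real N / (2 * (real N - 1))" by simp
    finally show ?thesis .
  qed
  have s_lo: "s \<ge> 1 / (real N - 1)"
  proof -
    have "s \<ge> 2 / real N * (real N / (2 * (real N - 1)))"
      unfolding sT using Tl N by (intro mult_left_mono) auto
    moreover have "2 / real N * (real N / (2 * (real N - 1))) = 1 / (real N - 1)" using N n1 by (simp add: field_simps)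
    ultimately show ?thesis by simp
  qed
  have s_up: "real N * s \<le> u" unfolding sT using Tu N by simp
  have u_up: "u \<le> real N"
  proof -
    have "u \<le> (\<Sum>i<N. 1)" unfolding u_def
    proof (rule sum_mono)
      fix i assume "i \<in> {..<N}"
      hence "d i \<ge> 1" using dpos by simp
      thus "1 / d i \<le> 1" by simp
    qed
    thus ?thesis by simp
  qed
  have a_lo: "a \<ge> 1"
  proof -
    have "(\<Sum>i<N. 1 / real N) \<le> a" unfolding a_def
    proof (rule sum_mono)
      fix i assume "i \<in> {..<N}"
      hence "d i \<le> real N - 1" "d i \<ge> 1" using dle dpos by auto
      hence "d i + 1 \<le> real N" "d i + 1 > 0" by linarith+
      thus "1 / real N \<le> 1 / (d i + 1)" by (intro divide_left_mono) auto
    qed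
    thus ?thesis using N by simp
  qed
  have ua: "u - real N / (real N - 1) \<le> 3 * a - 3"
  proof -
    have "(\<Sum>i<N. 1 / d i - 1 / (real N - 1)) \<le> (\<Sum>i<N. 3 * (1 / (d i + 1) - 1 / real N))"
    proof (rule sum_mono)
      fix i assume i: "i \<in> {..<N}"
      have "1 \<le> deg N E i" using dpos[of i] i by (simp add: d_def)
      moreover have "deg N E i \<le> N - 1" using dle[of i] i N by (simp add: d_def)
      ultimately show "1 / d i - 1 / (real N - 1) \<le> 3 * (1 / (d i + 1) - 1 / real N)"
        unfolding d_def by (rule vertex_bound[OF _ _ N])
    qed
    thus ?thesis using N unfolding u_def a_def by (simp add: sum_subtractf sum_distrib_left)
  qed
  show ?thesis
  proof (cases "N = 2")
    case True
    have "s = 1" using s_lo s_up u_up True by simp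
    hence "\<sigma> = 1" unfolding \<sigma>_def s_def by simp
    thus ?thesis using Rl a_lo True by simp
  next
    case False
    hence N3: "real N \<ge> 3" using N by simp
    have "real N * s \<le> real N * 1" using s_up u_up by simp
    hence s1: "s \<le> 1" using N by (simp add: mult_le_cancel_left_pos)
    have "real N * (1 / (1 + \<sigma> / sqrt (real N - 1)) + (real N - 2)\<^sup>2 / (real N - 1 - \<sigma> / sqrt (real N - 1)))
        \<le> (real N - 1)\<^sup>2 + (2/3) * (real N * s - real N / (real N - 1))"
      unfolding \<sigma>_def s_def[symmetric] by (rule real_main3[OF N3 s_lo s1])
    moreover have "(2/3) * (real N * s - real N / (real N - 1)) \<le> 2 * a - 2"
    proof -
      have "real N * s - real N / (real N - 1) \<le> 3 * a - 3" using s_up ua by linarith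
      thus ?thesis by simp
    qed
    moreover have "2 * real N * (real N - 1) - 2 * real N + 2 * a = 2 * (real N - 1)\<^sup>2 + (2 * a - 2)"
      by (simp add: power2_eq_square algebra_simps)
    ultimately show ?thesis using Rl by linarith
  qed
qed

end
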